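(* For every integer $n\ge2$, $R^p(n)\le \frac1n\cot\!\left(\frac{\pi}{2n}\right)$ (which is $<\tfrac{2}{\pi}$).
   Context: A qubit POVM is a finite family $\{\Pi_i\}_{i=1}^n$ of positive semidefinite operators summing to $\mathbb{I}$; it simulates $\{M_{a|x}\}$ if $M_{a|x}=\sum_i p(a|x,i)\Pi_i$ with $p(a|x,i)\ge0$, $\sum_a p(a|x,i)=1$. $\mathcal{P}^p_r$ is the family of two-outcome POVMs $\{\tfrac12(\mathbb{I}\pm r\hat n\cdot\vec\sigma)\}$ over all unit vectors $\hat n=(n_x,0,n_z)$. $R^p(n)$ is the supremum of $r$ such that some $n$-outcome qubit POVM simulates $\mathcal{P}^p_r$. *)

theory Defs
  imports "HOL-Analysis.Analysis"
begin

type_synonym qop = "complex^2^2"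

definition sigma_x :: qop where
  "sigma_x = (\<chi> i j. if i = j then 0 else 1)"

definition sigma_z :: qop where
  "sigma_z = (\<chi> i j. if i = j then (if i = 1 then 1 else -1) else 0)"

definition psd :: "qop \<Rightarrow> bool" where
  "psd A \<longleftrightarrow> (\<forall>v::complex^2.
      let q = (\<Sum>i\<in>UNIV. \<Sum>j\<in>UNIV. cnj (v$i) * A$i$j * v$j) in Im q = 0 \<and> 0 \<le> Re q)"

definition is_povm :: "nat \<Rightarrow> (nat \<Rightarrow> qop) \<Rightarrow> bool" where
  "is_povm n E \<longleftrightarrow> (\<forall>i<n. psd (E i)) \<and> (\<Sum>i<n. E i) = mat 1"

text \<open>The target family P^p_r: measurement x = (n_x, n_z) with n_x^2 + n_z^2 = 1,
  outcome a = True for +, False for -.\<close>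
definition target_meas :: "real \<Rightarrow> real \<times> real \<Rightarrow> bool \<Rightarrow> qop" where
  "target_meas r x a = (1/2::real) *\<^sub>R
      (mat 1 + (if a then 1 else -1) *\<^sub>R (r *\<^sub>R (fst x *\<^sub>R sigma_x + snd x *\<^sub>R sigma_z)))"

definition unit_xz :: "(real \<times> real) set" where
  "unit_xz = {x. (fst x)\<^sup>2 + (snd x)\<^sup>2 = 1}"

definition simulates_target :: "nat \<Rightarrow> (nat \<Rightarrow> qop) \<Rightarrow> real \<Rightarrow> bool" where
  "simulates_target n E r \<longleftrightarrow>
     (\<exists>p :: bool \<Rightarrow> real \<times> real \<Rightarrow> nat \<Rightarrow> real.
        \<forall>x\<in>unit_xz.
          (\<forall>a i. i < n \<longrightarrow> 0 \<le> p a x i) \<and>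
          (\<forall>i<n. p True x i + p False x i = 1) \<and>
          (\<forall>a. target_meas r x a = (\<Sum>i<n. p a x i *\<^sub>R E i)))"

definition Rp :: "nat \<Rightarrow> real" where
  "Rp n = Sup {r. \<exists>E. is_povm n E \<and> simulates_target n E r}"

end

theory Submission
  imports Defs
begin


lemma tan_gt_self:
  fixes x :: real assumes "0 < x" "x < pi/2" shows "x < tan x"
proof -
  have der: "\<And>y. 0 \<le> y \<Longrightarrow> y \<le> x \<Longrightarrow> DERIV (\<lambda>y. tan y - y) y :> (inverse ((cos y)\<^sup>2) - 1)"
  proof -
    fix y :: real assume "0 \<le> y" "y \<le> x"
    then have "cos y \<noteq> 0" using assms cos_gt_zero_pi[of y] by auto
    then show "DERIV (\<lambda>y. tan y - y) y :> (inverse ((cos y)\<^sup>2) - 1)"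
      by (auto intro!: derivative_eq_intros)
  qed
  obtain z where z: "0 < z" "z < x" "(tan x - x) - (tan 0 - 0) = (x - 0) * (inverse ((cos z)\<^sup>2) - 1)"
    using MVT2[OF assms(1) der] by auto
  have c0: "0 < cos z" using z assms cos_gt_zero_pi[of z] by auto
  have "cos z < 1"
  proof -
    have "cos z \<le> 1" by simp
    moreover have "cos z \<noteq> 1"
    proof
      assume "cos z = 1"
      then obtain k where "z = 2 * pi * real_of_int k" using cos_one_2pi_int by auto
      moreover have "0 < z" "z < 2 * pi" using z assms by auto
      ultimately have "0 < real_of_int k" "real_of_int k < 1" using pi_gt_zero
        by (simp_all add: zero_less_mult_iff)
      then show False by (metis of_int_0_less_iff of_int_less_1_iff zless_imp_add1_zle add_0 not_le)
    qed
    ultimately show ?thesis by linarith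
  qed
  then have "cos z * cos z < 1 * 1" using c0 by (intro mult_strict_mono) auto
  then have "(cos z)\<^sup>2 < 1" by (simp add: power2_eq_square)
  then have "inverse ((cos z)\<^sup>2) > 1" using c0 by (simp add: one_less_inverse)
  then have "(x - 0) * (inverse ((cos z)\<^sup>2) - 1) > 0" using assms by simp
  then show ?thesis using z by simp
qed

lemma convex_tan: "convex_on {0..<pi/2} tan"
proof (rule convex_on_realI[where f' = "\<lambda>x. inverse ((cos x)\<^sup>2)"])
  show "connected {0..<pi/2}" by simp
next
  fix x :: real assume "x \<in> {0..<pi/2}"
  then have "cos x \<noteq> 0" using cos_gt_zero_pi[of x] by auto
  then show "(tan has_real_derivative inverse ((cos x)\<^sup>2)) (at x)" by simp
next
  fix x y :: real assume xy: "x \<in> {0..<pi/2}" "y \<in> {0..<pi/2}" "x \<le> y"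
  have cy: "0 < cos y" using xy cos_gt_zero_pi[of y] by auto
  have "cos y \<le> cos x" using xy by (intro cos_monotone_0_pi_le) auto
  then have "(cos y)\<^sup>2 \<le> (cos x)\<^sup>2" using cy by (simp add: power_mono)
  then show "inverse ((cos x)\<^sup>2) \<le> inverse ((cos y)\<^sup>2)" using cy
    by (simp add: le_imp_inverse_le)
qed

lemma abs_sin_plus_int_pi: "\<bar>sin (x + real_of_int k * pi)\<bar> = \<bar>sin x\<bar>"
proof -
  have s: "sin (real_of_int k * pi) = 0" using sin_zero_iff_int2 by blast
  then have "(cos (real_of_int k * pi))\<^sup>2 = 1" using sin_cos_squared_add[of "real_of_int k * pi"] by simp
  then have "\<bar>cos (real_of_int k * pi)\<bar> = 1"
    by (metis abs_of_nonneg abs_power2 power2_eq_1_iff zero_le_one abs_minus_cancel abs_one)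
  then show ?thesis by (simp add: sin_add s abs_mult)
qed



lemma tan_half_sum:
  fixes x y :: real assumes "cos ((y - x)/2) \<noteq> 0"
  shows "tan ((y - x)/2) * (sin x + sin y) = cos x - cos y"
proof -
  have "sin x + sin y = 2 * sin ((x + y)/2) * cos ((y - x)/2)"
    using sin_plus_sin[of y x] by (simp add: add.commute)
  moreover have "cos x - cos y = 2 * sin ((x + y)/2) * sin ((y - x)/2)"
    using cos_diff_cos[of x y] by simp
  ultimately show ?thesis using assms by (simp add: tan_def field_simps)
qed

lemma gap_term:
  fixes u v :: real
  assumes "u \<le> v" "v - u < pi" "0 \<le> u" "v \<le> pi"
  shows "tan ((v - u)/2) * (\<bar>sin u\<bar> + \<bar>sin v\<bar>) = cos u - cos v"
proof -
  have "cos ((v - u)/2) \<noteq> 0" using assms cos_gt_zero_pi[of "(v-u)/2"] by auto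
  moreover have "\<bar>sin u\<bar> = sin u" "\<bar>sin v\<bar> = sin v" using assms sin_ge_zero by auto
  ultimately show ?thesis using tan_half_sum by simp
qed

lemma gap_term_neg:
  fixes u v :: real
  assumes "u \<le> v" "v - u < pi" "-pi \<le> u" "v \<le> 0"
  shows "tan ((v - u)/2) * (\<bar>sin u\<bar> + \<bar>sin v\<bar>) = cos (u + pi) - cos (v + pi)"
proof -
  have "tan (((v + pi) - (u + pi))/2) * (\<bar>sin (u + pi)\<bar> + \<bar>sin (v+pi)\<bar>) = cos (u + pi) - cos (v + pi)"
    using assms by (intro gap_term) auto
  then show ?thesis by simp
qed

lemma telescope:
  fixes a :: "nat \<Rightarrow> real" and n p :: nat
  assumes mono: "\<And>i j. i \<le> j \<Longrightarrow> j \<le> n \<Longrightarrow> a i \<le> a j"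
    and an: "a n = a 0 + pi"
    and gaps: "\<And>k. k < n \<Longrightarrow> a (Suc k) - a k < pi"
    and p: "p < n"
  shows "(\<Sum>k<n. tan ((a (Suc k) - a k)/2) * (\<bar>sin (a k - a p)\<bar> + \<bar>sin (a (Suc k) - a p)\<bar>)) = 2"
proof -
  let ?F = "\<lambda>k. tan ((a (Suc k) - a k)/2) * (\<bar>sin (a k - a p)\<bar> + \<bar>sin (a (Suc k) - a p)\<bar>)"
  have split: "{..<n} = {0..<p} \<union> {p..<n}" using p by auto
  have s1: "(\<Sum>k\<in>{p..<n}. ?F k) = (\<Sum>k\<in>{p..<n}. (- cos (a (Suc k) - a p)) - (- cos (a k - a p)))"
  proof (rule sum.cong)
    fix k assume k: "k \<in> {p..<n}"
    have "?F k = tan (((a (Suc k) - a p) - (a k - a p))/2) * (\<bar>sin (a k - a p)\<bar> + \<bar>sin (a (Suc k) - a p)\<bar>)"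
      by simp
    also have "\<dots> = cos (a k - a p) - cos (a (Suc k) - a p)"
      using k mono[of k "Suc k"] mono[of p k] mono[of 0 p] mono[of "Suc k" n] gaps[of k] an
      by (intro gap_term) auto
    finally show "?F k = (- cos (a (Suc k) - a p)) - (- cos (a k - a p))" by simp
  qed simp
  have s1': "(\<Sum>k\<in>{p..<n}. ?F k) = 1 + cos (a 0 - a p)"
  proof -
    have c: "cos (pi + a 0 - a p) = - cos (a 0 - a p)"
      using cos_periodic_pi[of "a 0 - a p"] by (simp add: algebra_simps)
    show ?thesis
    using s1 sum_Suc_diff'[of p n "\<lambda>k. - cos (a k - a p)"] p an c
    by (simp add: algebra_simps)
  qed
  have s2: "(\<Sum>k\<in>{0..<p}. ?F k) = (\<Sum>k\<in>{0..<p}. (- cos (a (Suc k) - a p + pi)) - (- cos (a k - a p + pi)))"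
  proof (rule sum.cong)
    fix k assume k: "k \<in> {0..<p}"
    have "?F k = tan (((a (Suc k) - a p) - (a k - a p))/2) * (\<bar>sin (a k - a p)\<bar> + \<bar>sin (a (Suc k) - a p)\<bar>)"
      by simp
    also have "\<dots> = cos (a k - a p + pi) - cos (a (Suc k) - a p + pi)"
      using k p mono[of k "Suc k"] mono[of "Suc k" p] mono[of 0 k] mono[of p n] gaps[of k] an
      by (intro gap_term_neg) auto
    finally show "?F k = (- cos (a (Suc k) - a p + pi)) - (- cos (a k - a p + pi))" by simp
  qed simp
  have s2': "(\<Sum>k\<in>{0..<p}. ?F k) = 1 - cos (a 0 - a p)"
  proof -
    have c: "cos (pi + a 0 - a p) = - cos (a 0 - a p)"
      using cos_periodic_pi[of "a 0 - a p"] by (simp add: algebra_simps)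
    show ?thesis
    using s2 sum_Suc_diff'[of 0 p "\<lambda>k. - cos (a k - a p + pi)"] c
    by (simp add: algebra_simps)
  qed
  have "(\<Sum>k<n. ?F k) = (\<Sum>k\<in>{0..<p}. ?F k) + (\<Sum>k\<in>{p..<n}. ?F k)"
    unfolding split by (rule sum.union_disjoint) auto
  then show ?thesis using s1' s2' by simp
qed



lemma jensen_gaps:
  fixes a :: "nat \<Rightarrow> real" and n :: nat
  assumes n: "n \<ge> 1"
    and an: "a n = a 0 + pi"
    and g0: "\<And>k. k < n \<Longrightarrow> 0 \<le> a (Suc k) - a k"
    and g1: "\<And>k. k < n \<Longrightarrow> a (Suc k) - a k < pi"
  shows "real n * tan (pi / (2 * real n)) \<le> (\<Sum>k<n. tan ((a (Suc k) - a k)/2))"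
proof -
  have tel: "(\<Sum>k<n. a (Suc k) - a k) = pi"
    using sum_Suc_diff'[of 0 n a] an by (simp add: atLeast0LessThan)
  have "tan (\<Sum>k\<in>{..<n}. (1/real n) *\<^sub>R ((a (Suc k) - a k)/2))
        \<le> (\<Sum>k\<in>{..<n}. (1/real n) * tan ((a (Suc k) - a k)/2))"
  proof (intro convex_on_sum[OF _ _ convex_tan])
    show "{..<n} \<noteq> {}" using n lessThan_empty_iff by (metis not_one_le_zero)
    fix k assume "k \<in> {..<n}"
    then have "0 \<le> a (Suc k) - a k" "a (Suc k) - a k < pi" using g0 g1 by auto
    then show "(a (Suc k) - a k) / 2 \<in> {0..<pi / 2}" by auto
  qed (use n in \<open>auto simp: field_simps\<close>)
  moreover have "(\<Sum>k\<in>{..<n}. (1/real n) *\<^sub>R ((a (Suc k) - a k)/2)) = pi / (2 * real n)"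
    using tel by (simp add: sum_divide_distrib[symmetric] sum_distrib_left[symmetric])
  ultimately have "tan (pi / (2 * real n)) \<le> (\<Sum>k<n. tan ((a (Suc k) - a k)/2)) / real n"
    by (simp add: sum_divide_distrib[symmetric])
  then show ?thesis using n by (simp add: field_simps)
qed



lemma core_sorted:
  fixes n :: nat and r \<psi> :: "nat \<Rightarrow> real"
  assumes n: "n \<ge> 2"
    and r: "\<And>i. i < n \<Longrightarrow> 0 \<le> r i"
    and \<psi>: "\<And>i. i < n \<Longrightarrow> 0 \<le> \<psi> i \<and> \<psi> i < pi"
  shows "\<exists>\<theta>. (\<Sum>i<n. r i * \<bar>sin (\<theta> - \<psi> i)\<bar>) \<le> (\<Sum>i<n. r i) * (cot (pi / (2 * real n)) / real n)"
proof -
  define xs where "xs = sort (map \<psi> [0..<n])"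
  have len: "length xs = n" unfolding xs_def by simp
  have srt: "sorted xs" unfolding xs_def by simp
  have setxs: "set xs = \<psi> ` {..<n}" unfolding xs_def by auto
  have xsr: "\<And>k. k < n \<Longrightarrow> 0 \<le> xs!k \<and> xs!k < pi"
  proof -
    fix k assume "k < n"
    then have "xs!k \<in> \<psi> ` {..<n}" using setxs len nth_mem by metis
    then obtain i where "i < n" "xs!k = \<psi> i" by auto
    then show "0 \<le> xs!k \<and> xs!k < pi" using \<psi> by simp
  qed
  have xsm: "\<And>i j. i \<le> j \<Longrightarrow> j < n \<Longrightarrow> xs!i \<le> xs!j"
    using sorted_nth_mono[OF srt] len by simp
  have inxs: "\<And>i. i < n \<Longrightarrow> \<exists>p<n. xs!p = \<psi> i"
  proof -
    fix i assume "i < n"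
    then have "\<psi> i \<in> set xs" using setxs by auto
    then show "\<exists>p<n. xs!p = \<psi> i" using len by (auto simp: in_set_conv_nth)
  qed
  define K where "K = cot (pi / (2 * real n)) / real n"
  have pos: "0 < pi / (2 * real n)" "pi / (2 * real n) < pi / 2" using n by (auto simp: field_simps)
  have Kpos: "0 \<le> K" unfolding K_def cot_def
    using pos sin_gt_zero[of "pi / (2 * real n)"] cos_gt_zero_pi[of "pi / (2 * real n)"] by auto
  define f where "f = (\<lambda>\<theta>. \<Sum>i<n. r i * \<bar>sin (\<theta> - \<psi> i)\<bar>)"
  show ?thesis
  proof (cases "xs!0 = xs!(n-1)")
    case True
    have "\<And>k. k < n \<Longrightarrow> xs!k = xs!0"
    proof -
      fix k assume k: "k < n"
      have "xs!0 \<le> xs!k" using xsm[of 0 k] k by simp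
      moreover have "xs!k \<le> xs!(n-1)" using xsm[of k "n-1"] k n by simp
      ultimately show "xs!k = xs!0" using True by simp
    qed
    then have "\<And>i. i < n \<Longrightarrow> \<psi> i = xs!0" using inxs by metis
    then have "f (xs!0) = 0" unfolding f_def by simp
    moreover have "0 \<le> (\<Sum>i<n. r i) * K" using r Kpos by (intro mult_nonneg_nonneg sum_nonneg) auto
    ultimately show ?thesis unfolding f_def K_def by metis
  next
    case False
    then have lt: "xs!0 < xs!(n-1)" using xsm[of 0 "n-1"] n by force
    define a where "a = (\<lambda>k. if k < n then xs!k else xs!0 + pi)"
    have an: "a n = a 0 + pi" using n by (simp add: a_def)
    have mono: "\<And>i j. i \<le> j \<Longrightarrow> j \<le> n \<Longrightarrow> a i \<le> a j"
    proof -
      fix i j :: nat assume ij: "i \<le> j" "j \<le> n"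
      show "a i \<le> a j"
      proof (cases "j < n")
        case True then show ?thesis using ij xsm by (simp add: a_def)
      next
        case False
        then have "j = n" using ij by simp
        then show ?thesis using ij xsr[of i] xsr[of 0] n by (auto simp: a_def)
      qed
    qed
    have gaps: "\<And>k. k < n \<Longrightarrow> a (Suc k) - a k < pi"
    proof -
      fix k assume k: "k < n"
      show "a (Suc k) - a k < pi"
      proof (cases "Suc k < n")
        case True then show ?thesis using xsr[of k] xsr[of "Suc k"] k by (simp add: a_def)
      next
        case False
        then have "k = n - 1" using k by simp
        then show ?thesis using lt k by (simp add: a_def)
      qed
    qed
    define t where "t = (\<lambda>k. tan ((a (Suc k) - a k)/2))"
    define T where "T = (\<Sum>k<n. t k)"
    have t0: "\<And>k. k < n \<Longrightarrow> 0 \<le> t k"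
    proof -
      fix k assume k: "k < n"
      have "0 \<le> a (Suc k) - a k" using mono[of k "Suc k"] k by simp
      then show "0 \<le> t k" using gaps[OF k] unfolding t_def
        by (cases "a (Suc k) - a k = 0") (auto intro!: less_imp_le[OF tan_gt_zero])
    qed
    have TJ: "real n * tan (pi / (2 * real n)) \<le> T"
      unfolding T_def t_def
    proof (rule jensen_gaps)
      show "1 \<le> n" using n by simp
      show "a n = a 0 + pi" by (rule an)
      fix k assume k: "k < n"
      show "0 \<le> a (Suc k) - a k" using mono[of k "Suc k"] k by simp
      show "a (Suc k) - a k < pi" using gaps[OF k] .
    qed
    have tanpos: "0 < tan (pi / (2 * real n))" using pos tan_gt_zero by auto
    have npos: "0 < real n * tan (pi / (2 * real n))" using n tanpos by simp
    then have Tpos: "0 < T" using TJ by linarith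
    define m where "m = Min ((\<lambda>k. f (a k)) ` {..n})"
    have mle: "\<And>k. k \<le> n \<Longrightarrow> m \<le> f (a k)" unfolding m_def by (intro Min_le) auto
    have "m \<in> (\<lambda>k. f (a k)) ` {..n}" unfolding m_def by (intro Min_in) auto
    then obtain j where j: "j \<le> n" "f (a j) = m" by auto
    have "(\<Sum>k<n. t k * (f (a k) + f (a (Suc k))))
        = (\<Sum>k<n. \<Sum>i<n. r i * (t k * (\<bar>sin (a k - \<psi> i)\<bar> + \<bar>sin (a (Suc k) - \<psi> i)\<bar>)))"
    proof (rule sum.cong)
      fix k assume "k \<in> {..<n}"
      have "f (a k) + f (a (Suc k)) = (\<Sum>i<n. r i * (\<bar>sin (a k - \<psi> i)\<bar> + \<bar>sin (a (Suc k) - \<psi> i)\<bar>))"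
        unfolding f_def by (simp add: sum.distrib[symmetric] distrib_left)
      then show "t k * (f (a k) + f (a (Suc k))) = (\<Sum>i<n. r i * (t k * (\<bar>sin (a k - \<psi> i)\<bar> + \<bar>sin (a (Suc k) - \<psi> i)\<bar>)))"
        by (simp add: sum_distrib_left mult.left_commute)
    qed simp
    also have "\<dots> = (\<Sum>i<n. r i * (\<Sum>k<n. t k * (\<bar>sin (a k - \<psi> i)\<bar> + \<bar>sin (a (Suc k) - \<psi> i)\<bar>)))"
      by (simp only: sum_distrib_left) (rule sum.swap)
    also have "\<dots> = (\<Sum>i<n. r i * 2)"
    proof (rule sum.cong)
      fix i assume "i \<in> {..<n}"
      then obtain p where p: "p < n" "xs!p = \<psi> i" using inxs by auto
      then have "a p = \<psi> i" by (simp add: a_def)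
      then show "r i * (\<Sum>k<n. t k * (\<bar>sin (a k - \<psi> i)\<bar> + \<bar>sin (a (Suc k) - \<psi> i)\<bar>)) = r i * 2"
        using telescope[OF mono an gaps p(1)] unfolding t_def by simp
    qed simp
    finally have eq: "(\<Sum>k<n. t k * (f (a k) + f (a (Suc k)))) = 2 * (\<Sum>i<n. r i)"
      by (simp add: sum_distrib_left mult.commute)
    have "(\<Sum>k<n. t k * (2 * m)) \<le> (\<Sum>k<n. t k * (f (a k) + f (a (Suc k))))"
    proof (intro sum_mono mult_left_mono)
      fix k assume k: "k \<in> {..<n}"
      have "m \<le> f (a k)" "m \<le> f (a (Suc k))" using mle k by auto
      then show "2 * m \<le> f (a k) + f (a (Suc k))" by simp
      show "0 \<le> t k" using t0 k by simp
    qed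
    then have "T * (2 * m) \<le> 2 * (\<Sum>i<n. r i)" using eq by (simp add: T_def sum_distrib_right)
    then have "m \<le> (\<Sum>i<n. r i) / T" using Tpos by (simp add: field_simps)
    also have "\<dots> \<le> (\<Sum>i<n. r i) / (real n * tan (pi / (2 * real n)))"
      using TJ npos Tpos r by (intro divide_left_mono sum_nonneg) auto
    also have "\<dots> = (\<Sum>i<n. r i) * K"
      unfolding K_def by (simp add: cot_altdef field_simps)
    finally have "f (a j) \<le> (\<Sum>i<n. r i) * K" using j by simp
    then show ?thesis unfolding f_def K_def by metis
  qed
qed



lemma core:
  fixes n :: nat and r \<phi> :: "nat \<Rightarrow> real"
  assumes n: "n \<ge> 2"
    and r: "\<And>i. i < n \<Longrightarrow> 0 \<le> r i"
  shows "\<exists>\<theta>. (\<Sum>i<n. r i * \<bar>sin (\<theta> - \<phi> i)\<bar>) \<le> (\<Sum>i<n. r i) * (cot (pi / (2 * real n)) / real n)"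
proof -
  define \<psi> where "\<psi> = (\<lambda>i. \<phi> i - pi * real_of_int \<lfloor>\<phi> i / pi\<rfloor>)"
  have \<psi>r: "\<And>i. i < n \<Longrightarrow> 0 \<le> \<psi> i \<and> \<psi> i < pi"
  proof -
    fix i
    have a: "real_of_int \<lfloor>\<phi> i / pi\<rfloor> \<le> \<phi> i / pi" by (rule of_int_floor_le)
    have b: "\<phi> i / pi < real_of_int \<lfloor>\<phi> i / pi\<rfloor> + 1" by (rule real_of_int_floor_add_one_gt)
    have "pi * real_of_int \<lfloor>\<phi> i / pi\<rfloor> \<le> \<phi> i" using mult_left_mono[OF a, of pi] pi_gt_zero by simp
    moreover have "\<phi> i < pi * real_of_int \<lfloor>\<phi> i / pi\<rfloor> + pi" using mult_strict_left_mono[OF b, of pi] pi_gt_zero by (simp add: distrib_left)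
    ultimately show "0 \<le> \<psi> i \<and> \<psi> i < pi" unfolding \<psi>_def by simp
  qed
  obtain \<theta> where th: "(\<Sum>i<n. r i * \<bar>sin (\<theta> - \<psi> i)\<bar>) \<le> (\<Sum>i<n. r i) * (cot (pi / (2 * real n)) / real n)"
  proof -
    have "\<exists>\<theta>. (\<Sum>i<n. r i * \<bar>sin (\<theta> - \<psi> i)\<bar>) \<le> (\<Sum>i<n. r i) * (cot (pi / (2 * real n)) / real n)"
      by (rule core_sorted) (use n r \<psi>r in auto)
    then show ?thesis using that by blast
  qed
  have "\<And>i. \<bar>sin (\<theta> - \<psi> i)\<bar> = \<bar>sin (\<theta> - \<phi> i)\<bar>"
  proof -
    fix i
    have e: "\<theta> - \<psi> i = (\<theta> - \<phi> i) + real_of_int \<lfloor>\<phi> i / pi\<rfloor> * pi" unfolding \<psi>_def by simp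
    show "\<bar>sin (\<theta> - \<psi> i)\<bar> = \<bar>sin (\<theta> - \<phi> i)\<bar>"
      unfolding e by (rule abs_sin_plus_int_pi)
  qed
  then show ?thesis using th by auto
qed

lemma test1: "(sigma_x $ 1 $ 2 = 1) \<and> sigma_x $ 1 $ 1 = 0 \<and> sigma_z $ 2 $ 2 = -1 \<and> (mat 1 :: qop) $ 1 $ 2 = 0 \<and> (mat 1 :: qop) $ 2 $ 2 = 1"
  by (simp add: sigma_x_def sigma_z_def mat_def)



lemma discr:
  fixes \<alpha> \<delta> b :: real
  assumes "0 \<le> \<alpha>" "0 \<le> \<delta>" "\<And>t. 0 \<le> \<alpha> + 2 * b * t + \<delta> * t\<^sup>2"
  shows "b\<^sup>2 \<le> \<alpha> * \<delta>"
proof (cases "\<delta> = 0")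
  case True
  show ?thesis
  proof (rule ccontr)
    assume "\<not> ?thesis"
    then have "b \<noteq> 0" using True by simp
    have "0 \<le> \<alpha> + 2 * b * (-(\<alpha> + 1) / (2 * b)) + \<delta> * (-(\<alpha> + 1) / (2 * b))\<^sup>2" by (rule assms(3))
    then show False using True \<open>b \<noteq> 0\<close> by (simp add: field_simps)
  qed
next
  case False
  then have d: "0 < \<delta>" using assms by simp
  have "0 \<le> \<alpha> + 2 * b * (- b / \<delta>) + \<delta> * (- b / \<delta>)\<^sup>2" by (rule assms(3))
  then have "0 \<le> \<alpha> - b\<^sup>2 / \<delta>" using d by (simp add: field_simps power2_eq_square)
  then show ?thesis using d by (simp add: field_simps)
qed

definition qf :: "qop \<Rightarrow> complex^2 \<Rightarrow> complex" where
  "qf A v = (\<Sum>i\<in>UNIV. \<Sum>j\<in>UNIV. cnj (v$i) * A$i$j * v$j)"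

lemma psd_qf: "psd A \<Longrightarrow> 0 \<le> Re (qf A v)"
  unfolding psd_def qf_def Let_def by blast

lemma qf_2: "qf A v = cnj (v$1) * A$1$1 * v$1 + cnj (v$1) * A$1$2 * v$2 + cnj (v$2) * A$2$1 * v$1 + cnj (v$2) * A$2$2 * v$2"
  unfolding qf_def by (simp add: sum_2)

lemma psd_facts:
  assumes "psd A"
  shows "0 \<le> Re (A$1$1)" "0 \<le> Re (A$2$2)"
    "(Re (A$1$2 + A$2$1) / 2)\<^sup>2 \<le> Re (A$1$1) * Re (A$2$2)"
proof -
  have q: "\<And>t::real. 0 \<le> Re (A$1$1) + 2 * (Re (A$1$2 + A$2$1) / 2) * t + Re (A$2$2) * t\<^sup>2"
  proof -
    fix t :: real
    have "0 \<le> Re (qf A (\<chi> i. if i = 1 then 1 else complex_of_real t))" using psd_qf[OF assms] .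
    then show "0 \<le> Re (A$1$1) + 2 * (Re (A$1$2 + A$2$1) / 2) * t + Re (A$2$2) * t\<^sup>2"
      by (simp add: qf_2 power2_eq_square algebra_simps add_divide_distrib)
  qed
  have a: "0 \<le> Re (A$1$1)" using q[of 0] by simp
  have "0 \<le> Re (qf A (\<chi> i. if i = 1 then 0 else 1))" using psd_qf[OF assms] .
  then show d: "0 \<le> Re (A$2$2)" by (simp add: qf_2)
  show "0 \<le> Re (A$1$1)" by (rule a)
  show "(Re (A$1$2 + A$2$1) / 2)\<^sup>2 \<le> Re (A$1$1) * Re (A$2$2)"
    by (rule discr[OF a d q])
qed



definition Lf :: "real \<times> real \<Rightarrow> qop \<Rightarrow> real" where
  "Lf u M = fst u * (Re (M$1$2 + M$2$1) / 2) + snd u * ((Re (M$1$1) - Re (M$2$2)) / 2)"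

lemma Lf_add: "Lf u (A + B) = Lf u A + Lf u B"
  unfolding Lf_def by (simp add: algebra_simps add_divide_distrib diff_divide_distrib)

lemma Lf_scale: "Lf u (c *\<^sub>R A) = c * Lf u A"
  unfolding Lf_def by (simp add: algebra_simps)

lemma Lf_sum: "Lf u (\<Sum>i<(n::nat). p i *\<^sub>R E i) = (\<Sum>i<n. p i * Lf u (E i))"
proof (induction n)
  case 0 then show ?case by (simp add: Lf_def)
next
  case (Suc n) then show ?case by (simp add: Lf_add Lf_scale)
qed

lemma ent:
  fixes c s r x z :: real
  defines "M \<equiv> c *\<^sub>R (mat 1 + s *\<^sub>R (r *\<^sub>R (x *\<^sub>R sigma_x + z *\<^sub>R sigma_z))) :: qop"
  shows "Re (M $ 1 $ 2) = c * s * r * x" "Re (M $ 2 $ 1) = c * s * r * x"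
    "Re (M $ 1 $ 1) = c * (1 + s * r * z)" "Re (M $ 2 $ 2) = c * (1 - s * r * z)"
  unfolding M_def by (simp_all add: sigma_x_def sigma_z_def mat_def)

lemma Lf_target: "Lf u (target_meas r u a) = (if a then 1 else -1) * r * ((fst u)\<^sup>2 + (snd u)\<^sup>2) / 2"
proof -
  define s :: real where "s = (if a then 1 else -1)"
  have t: "target_meas r u a = (1/2) *\<^sub>R (mat 1 + s *\<^sub>R (r *\<^sub>R (fst u *\<^sub>R sigma_x + snd u *\<^sub>R sigma_z)))"
    unfolding target_meas_def s_def by simp
  have e1: "Re (target_meas r u a $ 1 $ 2) = (1/2) * s * r * fst u"
    unfolding t by (simp add: sigma_x_def sigma_z_def mat_def)
  have e2: "Re (target_meas r u a $ 2 $ 1) = (1/2) * s * r * fst u"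
    unfolding t by (simp add: sigma_x_def sigma_z_def mat_def)
  have e3: "Re (target_meas r u a $ 1 $ 1) = (1/2) * (1 + s * r * snd u)"
    unfolding t by (simp add: sigma_x_def sigma_z_def mat_def)
  have e4: "Re (target_meas r u a $ 2 $ 2) = (1/2) * (1 - s * r * snd u)"
    unfolding t by (simp add: sigma_x_def sigma_z_def mat_def)
  show ?thesis unfolding Lf_def plus_complex.sel e1 e2 e3 e4 s_def[symmetric]
    by (simp add: power2_eq_square algebra_simps add_divide_distrib)
qed

definition wv :: "qop \<Rightarrow> complex" where
  "wv M = Complex (Re (M$1$2 + M$2$1) / 2) ((Re (M$1$1) - Re (M$2$2)) / 2)"

lemma Lf_polar: "\<bar>Lf (cos (\<theta> - pi/2), sin (\<theta> - pi/2)) M\<bar> = cmod (wv M) * \<bar>sin (\<theta> - Arg (wv M))\<bar>"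
proof -
  let ?w = "wv M"
  have re: "Re ?w = cmod ?w * cos (Arg ?w)" and im: "Im ?w = cmod ?w * sin (Arg ?w)"
    by (cases "?w = 0"; simp add: cos_Arg sin_Arg)+
  have "Lf (cos (\<theta> - pi/2), sin (\<theta> - pi/2)) M = sin \<theta> * Re ?w - cos \<theta> * Im ?w"
  proof -
    have c: "cos (\<theta> - pi/2) = sin \<theta>" "sin (\<theta> - pi/2) = - cos \<theta>" by (simp_all add: cos_diff sin_diff)
    show ?thesis unfolding Lf_def wv_def c fst_conv snd_conv complex.sel by simp
  qed
  also have "\<dots> = cmod ?w * sin (\<theta> - Arg ?w)"
    unfolding sin_diff by (simp only: re im) (simp add: algebra_simps)
  finally show ?thesis by (simp add: abs_mult)
qed

lemma sq_half_id: "((x + y) / 2)\<^sup>2 = ((x - y) / 2)\<^sup>2 + x * (y::real)"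
  by (simp add: power2_eq_square field_simps)

lemma cmod_wv:
  assumes "psd M"
  shows "cmod (wv M) \<le> (Re (M$1$1) + Re (M$2$2)) / 2"
proof -
  note f = psd_facts[OF assms]
  have "(cmod (wv M))\<^sup>2 = (Re (M$1$2 + M$2$1) / 2)\<^sup>2 + ((Re (M$1$1) - Re (M$2$2)) / 2)\<^sup>2"
    unfolding wv_def cmod_power2 complex.sel ..
  also have "\<dots> \<le> ((Re (M$1$1) + Re (M$2$2)) / 2)\<^sup>2"
  proof -
    have "((Re (M$1$1) + Re (M$2$2)) / 2)\<^sup>2 = ((Re (M$1$1) - Re (M$2$2)) / 2)\<^sup>2 + Re (M$1$1) * Re (M$2$2)"
      by (rule sq_half_id)
    then show ?thesis using f(3) by linarith
  qed
  finally show ?thesis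
    by (rule power2_le_imp_le) (use f(1,2) in simp)
qed



lemma sim_bound:
  assumes sim: "simulates_target n E r" and x: "x \<in> unit_xz"
  shows "r \<le> (\<Sum>i<n. \<bar>Lf x (E i)\<bar>)"
proof -
  obtain p :: "bool \<Rightarrow> real \<times> real \<Rightarrow> nat \<Rightarrow> real" where
    p: "\<forall>x\<in>unit_xz. (\<forall>a i. i < n \<longrightarrow> 0 \<le> p a x i) \<and>
          (\<forall>i<n. p True x i + p False x i = 1) \<and>
          (\<forall>a. target_meas r x a = (\<Sum>i<n. p a x i *\<^sub>R E i))"
    using sim unfolding simulates_target_def by blast
  have u: "(fst x)\<^sup>2 + (snd x)\<^sup>2 = 1" using x unfolding unit_xz_def by simp
  have px: "\<And>a i. i < n \<Longrightarrow> 0 \<le> p a x i" "\<And>i. i < n \<Longrightarrow> p True x i + p False x i = 1"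
    "\<And>a. target_meas r x a = (\<Sum>i<n. p a x i *\<^sub>R E i)"
    using p x by auto
  have "r / 2 = (\<Sum>i<n. p True x i * Lf x (E i))"
    using Lf_target[of x r True] u unfolding px(3) Lf_sum by simp
  moreover have "- r / 2 = (\<Sum>i<n. p False x i * Lf x (E i))"
    using Lf_target[of x r False] u unfolding px(3) Lf_sum by simp
  ultimately have "r = (\<Sum>i<n. p True x i * Lf x (E i)) - (\<Sum>i<n. p False x i * Lf x (E i))"
    by linarith
  also have "\<dots> = (\<Sum>i<n. (p True x i - p False x i) * Lf x (E i))"
    by (simp add: sum_subtractf[symmetric] left_diff_distrib)
  also have "\<dots> \<le> (\<Sum>i<n. \<bar>Lf x (E i)\<bar>)"
  proof (rule sum_mono)
    fix i assume i: "i \<in> {..<n}"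
    have "\<bar>p True x i - p False x i\<bar> \<le> 1" using px(1)[of i True] px(1)[of i False] px(2)[of i] i by auto
    then have "\<bar>(p True x i - p False x i) * Lf x (E i)\<bar> \<le> \<bar>Lf x (E i)\<bar>"
      by (simp add: abs_mult mult_left_le_one_le)
    then show "(p True x i - p False x i) * Lf x (E i) \<le> \<bar>Lf x (E i)\<bar>" by linarith
  qed
  finally show ?thesis .
qed

lemma povm_trace:
  assumes "is_povm n E"
  shows "(\<Sum>i<n. (Re (E i $ 1 $ 1) + Re (E i $ 2 $ 2)) / 2) = 1"
proof -
  have s: "(\<Sum>i<n. E i) = mat 1" using assms unfolding is_povm_def by simp
  have "(\<Sum>i<n. E i) $ 1 $ 1 = 1" "(\<Sum>i<n. E i) $ 2 $ 2 = 1" unfolding s by (simp_all add: mat_def)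
  then have "(\<Sum>i<n. E i $ 1 $ 1) = 1" "(\<Sum>i<n. E i $ 2 $ 2) = 1" by simp_all
  then have "(\<Sum>i<n. Re (E i $ 1 $ 1)) = 1" "(\<Sum>i<n. Re (E i $ 2 $ 2)) = 1"
    by (metis Re_sum one_complex.sel(1))+
  then show ?thesis by (simp add: sum_divide_distrib[symmetric] sum.distrib)
qed

lemma K_nonneg: "2 \<le> n \<Longrightarrow> 0 \<le> cot (pi / (2 * real n)) / real n"
proof -
  assume n: "2 \<le> n"
  have pos: "0 < pi / (2 * real n)" "pi / (2 * real n) < pi / 2" using n by (auto simp: field_simps)
  then show ?thesis unfolding cot_def
    using sin_gt_zero[of "pi / (2 * real n)"] cos_gt_zero_pi[of "pi / (2 * real n)"] by auto
qed

lemma r_le_K: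
  assumes n: "2 \<le> n" and povm: "is_povm n E" and sim: "simulates_target n E r"
  shows "r \<le> cot (pi / (2 * real n)) / real n"
proof -
  define K where "K = cot (pi / (2 * real n)) / real n"
  define rr where "rr = (\<lambda>i. cmod (wv (E i)))"
  define \<phi> where "\<phi> = (\<lambda>i. Arg (wv (E i)))"
  have "\<exists>\<theta>. (\<Sum>i<n. rr i * \<bar>sin (\<theta> - \<phi> i)\<bar>) \<le> (\<Sum>i<n. rr i) * K"
    unfolding K_def by (rule core) (use n in \<open>auto simp: rr_def\<close>)
  then obtain \<theta> where th: "(\<Sum>i<n. rr i * \<bar>sin (\<theta> - \<phi> i)\<bar>) \<le> (\<Sum>i<n. rr i) * K" by blast
  define x where "x = (cos (\<theta> - pi/2), sin (\<theta> - pi/2))"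
  have x: "x \<in> unit_xz" unfolding x_def unit_xz_def by simp
  have "r \<le> (\<Sum>i<n. \<bar>Lf x (E i)\<bar>)" by (rule sim_bound[OF sim x])
  also have "\<dots> = (\<Sum>i<n. rr i * \<bar>sin (\<theta> - \<phi> i)\<bar>)"
    unfolding x_def Lf_polar rr_def \<phi>_def ..
  also have "\<dots> \<le> (\<Sum>i<n. rr i) * K" by (rule th)
  also have "\<dots> \<le> 1 * K"
  proof (rule mult_right_mono)
    have "(\<Sum>i<n. rr i) \<le> (\<Sum>i<n. (Re (E i $ 1 $ 1) + Re (E i $ 2 $ 2)) / 2)"
      unfolding rr_def using povm unfolding is_povm_def by (intro sum_mono cmod_wv) auto
    then show "(\<Sum>i<n. rr i) \<le> 1" using povm_trace[OF povm] by simp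
    show "0 \<le> K" unfolding K_def using K_nonneg[OF n] .
  qed
  finally show ?thesis unfolding K_def by simp
qed



lemma psd_one: "psd (mat 1)"
  unfolding psd_def Let_def
  by (simp add: sum_2 mat_def)

lemma psd_zero: "psd 0"
  unfolding psd_def Let_def by simp

lemma zero_in:
  assumes n: "1 \<le> n"
  shows "0 \<in> {r. \<exists>E. is_povm n E \<and> simulates_target n E r}"
proof -
  define E :: "nat \<Rightarrow> qop" where "E = (\<lambda>i. if i = 0 then mat 1 else 0)"
  have sE: "(\<Sum>i<n. E i) = mat 1" unfolding E_def using n by (simp add: sum.delta)
  have "is_povm n E" unfolding is_povm_def using sE psd_one psd_zero by (auto simp: E_def)
  moreover have "simulates_target n E 0"
    unfolding simulates_target_def
  proof (intro exI[of _ "\<lambda>a x i. 1/2"] ballI conjI allI impI)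
    fix x :: "real \<times> real" and a :: bool
    have "(\<Sum>i<n. (1/2::real) *\<^sub>R E i) = (1/2::real) *\<^sub>R mat 1"
      by (simp add: scaleR_sum_right[symmetric] sE)
    then show "target_meas 0 x a = (\<Sum>i<n. (1/2::real) *\<^sub>R E i)"
      unfolding target_meas_def by simp
  qed auto
  ultimately show ?thesis by blast
qed

lemma cot_bound:
  assumes n: "2 \<le> n"
  shows "cot (pi / (2 * real n)) / real n < 2 / pi"
proof -
  define t where "t = pi / (2 * real n)"
  have pos: "0 < t" "t < pi / 2" using n by (auto simp: field_simps t_def)
  have s: "0 < sin t" using pos sin_gt_zero[of t] by simp
  have c: "0 < cos t" using pos cos_gt_zero_pi[of t] by simp
  have "t < sin t / cos t" using tan_gt_self[OF pos] by (simp add: tan_def)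
  then have "t * cos t < sin t" using c by (simp add: field_simps)
  then have "cot t < 1 / t" using s pos by (simp add: cot_def field_simps)
  then have "cot t / real n < (1 / t) / real n" using n by (intro divide_strict_right_mono) auto
  also have "(1 / t) / real n = 2 / pi" unfolding t_def using n by (simp add: field_simps)
  finally show ?thesis unfolding t_def .
qed

theorem proposition4:
  fixes n :: nat
  assumes "n \<ge> 2"
  shows "Rp n \<le> cot (pi / (2 * real n)) / real n \<and> cot (pi / (2 * real n)) / real n < 2 / pi"
proof
  show "Rp n \<le> cot (pi / (2 * real n)) / real n"
    unfolding Rp_def
  proof (rule cSup_least)
    show "{r. \<exists>E. is_povm n E \<and> simulates_target n E r} \<noteq> {}" using zero_in[of n] assms by auto
    fix r assume "r \<in> {r. \<exists>E. is_povm n E \<and> simulates_target n E r}"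
    then show "r \<le> cot (pi / (2 * real n)) / real n" using r_le_K[OF assms] by blast
  qed
  show "cot (pi / (2 * real n)) / real n < 2 / pi" by (rule cot_bound[OF assms])
qed

end
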